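(* Let $k\ge2$ and $\varepsilon>0$, and let $a,b,K,s$, the sets $C_x\subseteq[K]$ ($x\in[k]$) and the randomiser $\mathcal{R}:[k]\to[K]$ be the generalised Hadamard Response with parameter $\varepsilon$ as defined in the context. For a distribution $\mathbf{p}$ on $[k]$, let $\Phi_\varepsilon(\mathbf{p})$ denote the distribution of $\mathcal{R}(x)$ for $x\sim\mathbf{p}$, i.e. $\Phi_\varepsilon(\mathbf{p})(y)=\frac{1}{se^\varepsilon+K-s}\big((e^\varepsilon-1)\sum_{x\in[k]}\mathbf{p}(x)\mathbf{1}\{y\in C_x\}+1\big)$. Then for any two distributions $\mathbf{p},\mathbf{q}$ on $[k]$, \[ \|\Phi_\varepsilon(\mathbf{p})-\Phi_\varepsilon(\mathbf{q})\|_2^2\ge\frac{1}{2s}\Big(\frac{e^\varepsilon-1}{e^\varepsilon+\frac Ks-1}\Big)^2\|\mathbf{p}-\mathbf{q}\|_2^2, \] and if $\mathbf{p}=\mathbf{q}$ then $\|\Phi_\varepsilon(\mathbf{p})-\Phi_\varepsilon(\mathbf{q})\|_2=0$.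
   Context: Generalised Hadamard Response with parameter $\varepsilon>0$ on $[k]$: $a=2^{\lfloor\log_2\min(e^{\varepsilon},2k)\rfloor}$, $b=2^{\lceil\log_2(k/a+1)\rceil}$, $K=ab$, $s=b/2$. Let $H_b$ be the $b\times b$ Sylvester Hadamard matrix and $P_b$ the $b\times b$ all-$(-1)$ matrix; $\bar H_{a,b}\in\{-1,1\}^{K\times K}$ is the $a\times a$ block matrix with $H_b$ on the diagonal blocks and $P_b$ in all off-diagonal blocks. The $a(b-1)\ge k$ rows of $\bar H_{a,b}$ that are not the first row of a diagonal copy of $H_b$ each have exactly $s$ entries $+1$; each $x\in[k]$ is mapped to a distinct such row, and $C_x\subseteq[K]$ is the set of columns where that row equals $+1$. The randomiser is $\Pr[\mathcal{R}(x)=y]=\frac{(e^\varepsilon-1)\mathbf{1}\{y\in C_x\}+1}{se^\varepsilon+K-s}$ for $y\in[K]$. *)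

theory Defs
  imports Complex_Main
begin

text \<open>Conventions: [k] = {0..<k}, [K] = {0..<K}; matrix rows/columns are 0-indexed.\<close>

definition ghr_a :: "nat \<Rightarrow> real \<Rightarrow> nat" where
  "ghr_a k \<epsilon> = 2 ^ nat \<lfloor>log 2 (min (exp \<epsilon>) (2 * real k))\<rfloor>"

definition ghr_b :: "nat \<Rightarrow> real \<Rightarrow> nat" where
  "ghr_b k \<epsilon> = 2 ^ nat \<lceil>log 2 (real k / real (ghr_a k \<epsilon>) + 1)\<rceil>"

definition ghr_K :: "nat \<Rightarrow> real \<Rightarrow> nat" where
  "ghr_K k \<epsilon> = ghr_a k \<epsilon> * ghr_b k \<epsilon>"

definition ghr_s :: "nat \<Rightarrow> real \<Rightarrow> nat" where
  "ghr_s k \<epsilon> = ghr_b k \<epsilon> div 2"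

fun popcount :: "nat \<Rightarrow> nat" where
  "popcount n = (if n = 0 then 0 else n mod 2 + popcount (n div 2))"

text \<open>Entry (i,j) of the Sylvester Hadamard matrix (of any size 2^m with i,j < 2^m):
  (-1) to the number of common one bits of i and j.\<close>
definition sylvester :: "nat \<Rightarrow> nat \<Rightarrow> int" where
  "sylvester i j = (-1) ^ popcount (and i j)"

definition Hbar :: "nat \<Rightarrow> nat \<Rightarrow> nat \<Rightarrow> int" where
  "Hbar b i j = (if i div b = j div b then sylvester (i mod b) (j mod b) else -1)"

text \<open>Rows of \<open>\<bar>H_{a,b}\<close> that are not the first row of a diagonal copy of H_b.\<close>
definition ghr_rows :: "nat \<Rightarrow> real \<Rightarrow> nat set" where
  "ghr_rows k \<epsilon> = {r. r < ghr_K k \<epsilon> \<and> r mod ghr_b k \<epsilon> \<noteq> 0}"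

text \<open>C_x for the row r assigned to x: the columns where row r equals +1.\<close>
definition ghr_C :: "nat \<Rightarrow> real \<Rightarrow> nat \<Rightarrow> nat set" where
  "ghr_C k \<epsilon> r = {j. j < ghr_K k \<epsilon> \<and> Hbar (ghr_b k \<epsilon>) r j = 1}"

text \<open>Randomiser: Pr[R(x) = y], where \<open>row\<close> assigns to each x its row.\<close>
definition ghr_R :: "nat \<Rightarrow> real \<Rightarrow> (nat \<Rightarrow> nat) \<Rightarrow> nat \<Rightarrow> nat \<Rightarrow> real" where
  "ghr_R k \<epsilon> row x y =
     ((exp \<epsilon> - 1) * (if y \<in> ghr_C k \<epsilon> (row x) then 1 else 0) + 1) /
     (real (ghr_s k \<epsilon>) * exp \<epsilon> + real (ghr_K k \<epsilon>) - real (ghr_s k \<epsilon>))"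

definition ghr_Phi :: "nat \<Rightarrow> real \<Rightarrow> (nat \<Rightarrow> nat) \<Rightarrow> (nat \<Rightarrow> real) \<Rightarrow> nat \<Rightarrow> real" where
  "ghr_Phi k \<epsilon> row p y = (\<Sum>x<k. p x * ghr_R k \<epsilon> row x y)"

definition is_distr :: "nat \<Rightarrow> (nat \<Rightarrow> real) \<Rightarrow> bool" where
  "is_distr n p \<longleftrightarrow> (\<forall>x<n. 0 \<le> p x) \<and> (\<Sum>x<n. p x) = 1"

definition sqdist :: "nat \<Rightarrow> (nat \<Rightarrow> real) \<Rightarrow> (nat \<Rightarrow> real) \<Rightarrow> real" where
  "sqdist n p q = (\<Sum>i<n. (p i - q i)^2)"

end

theory Submission
  imports Defs
begin


declare popcount.simps[simp del]

lemma popcount_0[simp]: "popcount 0 = 0"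
  by (subst popcount.simps) simp

lemma popcount_and_rec:
  "popcount (and i j) = (if odd i \<and> odd j then 1 else 0) + popcount (and (i div 2) (j div 2))"
proof -
  have e: "and i j = of_bool (odd i \<and> odd j) + 2 * (and (i div 2) (j div 2))"
    by (rule and_nat_rec)
  have "popcount (and i j) = (and i j) mod 2 + popcount (and i j div 2)"
    by (subst popcount.simps) simp
  also have "(and i j) mod 2 = (if odd i \<and> odd j then 1 else 0)"
    by (subst e) auto
  also have "and i j div 2 = and (i div 2) (j div 2)"
    by (subst e) auto
  finally show ?thesis .
qed

lemma sylvester_rec:
  "sylvester i j = (if odd i \<and> odd j then -1 else 1) * sylvester (i div 2) (j div 2)"
  unfolding sylvester_def by (subst popcount_and_rec) (simp only: power_add, simp)

lemma sum_even_odd: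
  fixes f :: "nat \<Rightarrow> 'a::comm_monoid_add"
  shows "(\<Sum>j<2*n. f j) = (\<Sum>j<n. f (2*j) + f (2*j+1))"
  by (induction n) (auto simp: add.assoc)

lemma sylvester_orth:
  "\<And>r r'. r < 2^m \<Longrightarrow> r' < 2^m \<Longrightarrow>
    (\<Sum>j<2^m. sylvester r j * sylvester r' j) = (if r = r' then 2^m else 0)"
proof (induction m)
  case 0
  then show ?case by (simp add: sylvester_def)
next
  case (Suc m)
  have h1: "r div 2 < 2^m" "r' div 2 < 2^m" using Suc.prems by auto
  have "(\<Sum>j<2^Suc m. sylvester r j * sylvester r' j)
      = (\<Sum>j<2^m. sylvester r (2*j) * sylvester r' (2*j) + sylvester r (2*j+1) * sylvester r' (2*j+1))"
    by (simp add: sum_even_odd)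
  also have "\<dots> = (\<Sum>j<2^m. (1 + (if odd r = odd r' then 1 else -1)) * (sylvester (r div 2) j * sylvester (r' div 2) j))"
    apply (rule sum.cong[OF refl])
    apply (subst (1 2 3 4) sylvester_rec)
    apply (auto simp: algebra_simps)
    done
  also have "\<dots> = (1 + (if odd r = odd r' then 1 else -1)) * (\<Sum>j<2^m. sylvester (r div 2) j * sylvester (r' div 2) j)"
    by (simp add: sum_distrib_left)
  also have "\<dots> = (if r = r' then 2^Suc m else 0)"
    using Suc.IH[OF h1]
  proof (cases "odd r = odd r'")
    case True
    have "r = r' \<longleftrightarrow> r div 2 = r' div 2"
      using True by (metis div_mult_mod_eq mod2_eq_if)
    then show ?thesis using True Suc.IH[OF h1] by simp
  next
    case False
    then have "r \<noteq> r'" by auto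
    then show ?thesis using False by simp
  qed
  finally show ?case .
qed

lemma sylvester_0: "sylvester 0 j = 1"
  by (simp add: sylvester_def)

lemma sylvester_pm: "sylvester i j = 1 \<or> sylvester i j = -1"
  unfolding sylvester_def by (cases "even (popcount (and i j))") auto

lemma sylvester_orth_real:
  assumes "r < 2^m" "r' < 2^m"
  shows "(\<Sum>j<2^m. real_of_int (sylvester r j * sylvester r' j)) = (if r = r' then 2^m else 0)"
proof -
  have "(\<Sum>j<2^m. real_of_int (sylvester r j * sylvester r' j)) = real_of_int (\<Sum>j<2^m. sylvester r j * sylvester r' j)"
    by simp
  also have "\<dots> = (if r = r' then 2^m else 0)" using sylvester_orth[OF assms] by simp
  finally show ?thesis .
qed

lemma sum_blocks:
  fixes f :: "nat \<Rightarrow> 'a::comm_monoid_add"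
  shows "(\<Sum>y<a*b. f y) = (\<Sum>i<a. \<Sum>j<b. f (i*b+j))"
proof (induction a)
  case 0
  then show ?case by simp
next
  case (Suc a)
  have u: "{..<Suc a * b} = {..<a*b} \<union> {a*b..<a*b+b}" by auto
  have "(\<Sum>y<Suc a*b. f y) = (\<Sum>y<a*b. f y) + (\<Sum>y\<in>{a*b..<a*b+b}. f y)"
    unfolding u by (rule sum.union_disjoint) auto
  also have "(\<Sum>y\<in>{a*b..<a*b+b}. f y) = (\<Sum>j\<in>{0..<b}. f (j+a*b))"
    using sum.shift_bounds_nat_ivl[of f 0 "a*b" b] by (simp add: add.commute)
  also have "\<dots> = (\<Sum>j<b. f (a*b+j))"
    by (simp add: atLeast0LessThan add.commute)
  finally show ?case using Suc.IH by simp
qed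

lemma Hbar_block:
  assumes "j < b"
  shows "Hbar b r (i*b+j) = (if r div b = i then sylvester (r mod b) j else -1)"
  using assms by (simp add: Hbar_def)

lemma Hbar_gram:
  assumes b: "b = 2^m" and r: "r < a*b" "r' < a*b" "r mod b \<noteq> 0" "r' mod b \<noteq> 0"
  shows "(\<Sum>y<a*b. real_of_int (Hbar b r y * Hbar b r' y))
       = real b * (if r = r' then 1 else 0) + real b * (\<Sum>i<a. if i \<noteq> r div b \<and> i \<noteq> r' div b then 1 else 0)"
proof -
  have bpos: "b > 0" using b by simp
  define R where "R = r div b"
  define R' where "R' = r' div b"
  define \<rho> where "\<rho> = r mod b"
  define \<rho>' where "\<rho>' = r' mod b"
  have \<rho>: "\<rho> < 2^m" "\<rho>' < 2^m" "\<rho> \<noteq> 0" "\<rho>' \<noteq> 0" using r bpos b by (auto simp: \<rho>_def \<rho>'_def)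
  have Ra: "R < a" using r bpos by (simp add: R_def less_mult_imp_div_less)
  have eq: "r = r' \<longleftrightarrow> R = R' \<and> \<rho> = \<rho>'"
    unfolding R_def R'_def \<rho>_def \<rho>'_def by (metis div_mult_mod_eq)
  have rs: "(\<Sum>j<b. real_of_int (sylvester t j)) = 0" if "t < 2^m" "t \<noteq> 0" for t
    using sylvester_orth_real[OF that(1), of 0] that b by (simp add: sylvester_0)
  have inner: "(\<Sum>j<b. real_of_int (Hbar b r (i*b+j) * Hbar b r' (i*b+j)))
      = real b * (if i = R \<and> i = R' \<and> \<rho> = \<rho>' then 1 else 0) + real b * (if i \<noteq> R \<and> i \<noteq> R' then 1 else 0)" for i
  proof -
    have "(\<Sum>j<b. real_of_int (Hbar b r (i*b+j) * Hbar b r' (i*b+j)))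
       = (\<Sum>j<b. real_of_int ((if R = i then sylvester \<rho> j else -1) * (if R' = i then sylvester \<rho>' j else -1)))"
      by (rule sum.cong[OF refl]) (simp add: Hbar_block R_def R'_def \<rho>_def \<rho>'_def)
    also have "\<dots> = real b * (if i = R \<and> i = R' \<and> \<rho> = \<rho>' then 1 else 0) + real b * (if i \<noteq> R \<and> i \<noteq> R' then 1 else 0)"
    proof (cases "R = i")
      case True
      show ?thesis
      proof (cases "R' = i")
        case True2: True
        show ?thesis using True True2 sylvester_orth_real[OF \<rho>(1,2)] b by simp
      next
        case False
        show ?thesis using True False rs[OF \<rho>(1,3)] by (simp add: sum_negf)
      qed
    next
      case False
      show ?thesis
      proof (cases "R' = i")
        case True2: True
        show ?thesis using False True2 rs[OF \<rho>(2,4)] by (simp add: sum_negf)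
      next
        case False2: False
        show ?thesis using False False2 by simp
      qed
    qed
    finally show ?thesis .
  qed
  have "(\<Sum>y<a*b. real_of_int (Hbar b r y * Hbar b r' y))
      = (\<Sum>i<a. \<Sum>j<b. real_of_int (Hbar b r (i*b+j) * Hbar b r' (i*b+j)))"
    by (rule sum_blocks)
  also have "\<dots> = (\<Sum>i<a. real b * (if i = R \<and> i = R' \<and> \<rho> = \<rho>' then 1 else 0)) + (\<Sum>i<a. real b * (if i \<noteq> R \<and> i \<noteq> R' then 1 else 0))"
    by (simp only: inner sum.distrib)
  also have "(\<Sum>i<a. real b * (if i = R \<and> i = R' \<and> \<rho> = \<rho>' then 1 else 0)) = real b * (if r = r' then 1 else 0)"
  proof -
    have "(\<Sum>i<a. real b * (if i = R \<and> i = R' \<and> \<rho> = \<rho>' then 1 else 0)) = (\<Sum>i<a. if i = R then (real b * (if R = R' \<and> \<rho> = \<rho>' then 1 else 0)) else 0)"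
      by (rule sum.cong) auto
    also have "\<dots> = real b * (if R = R' \<and> \<rho> = \<rho>' then 1 else 0)" using Ra by simp
    finally show ?thesis using eq by simp
  qed
  finally show ?thesis by (simp add: R_def R'_def sum_distrib_left)
qed



lemma quad_ge:
  fixes d :: "nat \<Rightarrow> real" and e :: "nat \<Rightarrow> nat \<Rightarrow> real" and B :: real
  assumes "B \<ge> 0"
  shows "(\<Sum>x<k. \<Sum>x'<k. d x * d x' * (B * (if x = x' then 1 else 0) + B * (\<Sum>i<a. e i x * e i x')))
         \<ge> B * (\<Sum>x<k. (d x)^2)"
proof -
  have "(\<Sum>x<k. \<Sum>x'<k. d x * d x' * (B * (if x = x' then 1 else 0) + B * (\<Sum>i<a. e i x * e i x')))
      = (\<Sum>x<k. \<Sum>x'<k. B * (d x * (d x' * (if x = x' then 1 else 0)))) + (\<Sum>x<k. \<Sum>x'<k. B * (\<Sum>i<a. (d x * e i x) * (d x' * e i x')))"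
    by (simp add: algebra_simps sum.distrib sum_distrib_left)
  also have "(\<Sum>x<k. \<Sum>x'<k. B * (d x * (d x' * (if x = x' then 1 else 0)))) = (\<Sum>x<k. \<Sum>x'<k. (if x = x' then B * (d x)^2 else 0))"
    by (rule sum.cong[OF refl], rule sum.cong[OF refl]) (simp add: power2_eq_square)
  also have "\<dots> = B * (\<Sum>x<k. (d x)^2)"
    by (simp add: sum_distrib_left)
  also have "(\<Sum>x<k. \<Sum>x'<k. B * (\<Sum>i<a. (d x * e i x) * (d x' * e i x'))) = B * (\<Sum>i<a. (\<Sum>x<k. d x * e i x)^2)"
  proof -
    have "(\<Sum>x<k. \<Sum>x'<k. B * (\<Sum>i<a. (d x * e i x) * (d x' * e i x'))) = B * (\<Sum>x<k. \<Sum>x'<k. \<Sum>i<a. (d x * e i x) * (d x' * e i x'))"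
      by (simp add: sum_distrib_left)
    also have "(\<Sum>x<k. \<Sum>x'<k. \<Sum>i<a. (d x * e i x) * (d x' * e i x')) = (\<Sum>x<k. \<Sum>i<a. \<Sum>x'<k. (d x * e i x) * (d x' * e i x'))"
      by (rule sum.cong[OF refl], rule sum.swap)
    also have "\<dots> = (\<Sum>i<a. \<Sum>x<k. \<Sum>x'<k. (d x * e i x) * (d x' * e i x'))"
      by (rule sum.swap)
    also have "\<dots> = (\<Sum>i<a. (\<Sum>x<k. d x * e i x)^2)"
      by (simp add: power2_eq_square sum_product)
    finally show ?thesis by simp
  qed
  finally show ?thesis using assms by (simp add: sum_nonneg)
qed

lemma sq_expand:
  fixes d :: "nat \<Rightarrow> real" and H :: "nat \<Rightarrow> nat \<Rightarrow> real"
  shows "(\<Sum>y<K. (\<Sum>x<k. d x * H x y)^2) = (\<Sum>x<k. \<Sum>x'<k. d x * d x' * (\<Sum>y<K. H x y * H x' y))"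
proof -
  have "(\<Sum>y<K. (\<Sum>x<k. d x * H x y)^2) = (\<Sum>y<K. \<Sum>x<k. \<Sum>x'<k. d x * d x' * (H x y * H x' y))"
    by (simp add: power2_eq_square sum_product algebra_simps)
  also have "\<dots> = (\<Sum>x<k. \<Sum>y<K. \<Sum>x'<k. d x * d x' * (H x y * H x' y))"
    by (rule sum.swap)
  also have "\<dots> = (\<Sum>x<k. \<Sum>x'<k. \<Sum>y<K. d x * d x' * (H x y * H x' y))"
    by (rule sum.cong[OF refl], rule sum.swap)
  also have "\<dots> = (\<Sum>x<k. \<Sum>x'<k. d x * d x' * (\<Sum>y<K. H x y * H x' y))"
    by (simp add: sum_distrib_left)
  finally show ?thesis .
qed



lemma Hbar_pm: "Hbar b r y = 1 \<or> Hbar b r y = -1"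
  unfolding Hbar_def using sylvester_pm by auto

lemma ghr_a_pos: "ghr_a k \<epsilon> > 0"
  by (simp add: ghr_a_def)

lemma ghr_b_pow:
  assumes "k \<ge> 1"
  shows "\<exists>m. m \<ge> 1 \<and> ghr_b k \<epsilon> = 2^m"
proof -
  have a: "real (ghr_a k \<epsilon>) > 0" using ghr_a_pos by simp
  have "real k / real (ghr_a k \<epsilon>) > 0" using assms a by simp
  then have "log 2 (real k / real (ghr_a k \<epsilon>) + 1) > 0" by simp
  then have "nat \<lceil>log 2 (real k / real (ghr_a k \<epsilon>) + 1)\<rceil> \<ge> 1" by linarith
  then show ?thesis unfolding ghr_b_def by blast
qed

theorem lemma4p4:
  fixes k :: nat and \<epsilon> :: real and row :: "nat \<Rightarrow> nat" and p q :: "nat \<Rightarrow> real"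
  assumes "k \<ge> 2" and "\<epsilon> > 0"
    and "inj_on row {..<k}" and "row ` {..<k} \<subseteq> ghr_rows k \<epsilon>"
    and "is_distr k p" and "is_distr k q"
  shows "sqdist (ghr_K k \<epsilon>) (ghr_Phi k \<epsilon> row p) (ghr_Phi k \<epsilon> row q)
           \<ge> 1 / (2 * real (ghr_s k \<epsilon>)) *
             ((exp \<epsilon> - 1) / (exp \<epsilon> + real (ghr_K k \<epsilon>) / real (ghr_s k \<epsilon>) - 1))^2 * sqdist k p q
         \<and> ((\<forall>x<k. p x = q x) \<longrightarrow> sqrt (sqdist (ghr_K k \<epsilon>) (ghr_Phi k \<epsilon> row p) (ghr_Phi k \<epsilon> row q)) = 0)"
proof
  define a where "a = ghr_a k \<epsilon>"
  define b where "b = ghr_b k \<epsilon>"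
  define K where "K = ghr_K k \<epsilon>"
  define s where "s = ghr_s k \<epsilon>"
  define E where "E = exp \<epsilon>"
  define D where "D = real s * E + real K - real s"
  define c where "c = (E - 1) / D"
  define d where "d x = p x - q x" for x
  define Hr where "Hr x y = real_of_int (Hbar b (row x) y)" for x y
  obtain m where m: "m \<ge> 1" "b = 2^m" using ghr_b_pow[of k \<epsilon>] assms(1) unfolding b_def by auto
  have Kab: "K = a * b" by (simp add: K_def a_def b_def ghr_K_def)
  have bpos: "b > 0" using m by simp
  have apos: "a > 0" using ghr_a_pos a_def by simp
  have s2: "real b = 2 * real s"
  proof -
    have "even b" using m by (simp add: dvd_power)
    then show ?thesis unfolding s_def ghr_s_def b_def[symmetric] by (metis dvd_mult_div_cancel of_nat_mult of_nat_numeral)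
  qed
  have spos: "real s > 0" using s2 bpos by simp
  have E1: "E > 1" using assms(2) by (simp add: E_def)
  have Kpos: "real K > 0" using Kab apos bpos by simp
  have Dpos: "D > 0" unfolding D_def using spos E1 Kpos
    by (smt (verit, ccfv_SIG) mult_less_cancel_left1)
  have rows: "row x < a * b" "row x mod b \<noteq> 0" if "x < k" for x
    using assms(4) that unfolding ghr_rows_def K_def[symmetric] b_def[symmetric] Kab by auto
  have sumd: "(\<Sum>x<k. d x) = 0"
    using assms(5,6) by (simp add: is_distr_def d_def sum_subtractf)
  have ind: "(if y \<in> ghr_C k \<epsilon> (row x) then 1 else 0 :: real) = (1 + Hr x y) / 2" if "y < K" for x y
    using that Hbar_pm[of b "row x" y]
    unfolding ghr_C_def K_def[symmetric] b_def[symmetric] Hr_def by auto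
  have diff: "ghr_Phi k \<epsilon> row p y - ghr_Phi k \<epsilon> row q y = c / 2 * (\<Sum>x<k. d x * Hr x y)"
    if "y < K" for y
  proof -
    have "ghr_Phi k \<epsilon> row p y - ghr_Phi k \<epsilon> row q y = (\<Sum>x<k. d x * ghr_R k \<epsilon> row x y)"
      by (simp add: ghr_Phi_def d_def sum_subtractf algebra_simps)
    also have "\<dots> = (\<Sum>x<k. c / 2 * (d x * Hr x y) + (c / 2 + 1 / D) * d x)"
      apply (rule sum.cong[OF refl])
      unfolding ghr_R_def ind[OF that] E_def[symmetric] D_def[symmetric] s_def[symmetric] K_def[symmetric] c_def
      using Dpos by (simp add: field_simps)
    also have "\<dots> = c / 2 * (\<Sum>x<k. d x * Hr x y) + (c / 2 + 1 / D) * (\<Sum>x<k. d x)"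
      by (simp add: sum.distrib sum_distrib_left)
    finally show ?thesis using sumd by simp
  qed
  have gram: "(\<Sum>y<K. Hr x y * Hr x' y) = real b * (if x = x' then 1 else 0)
      + real b * (\<Sum>i<a. (if i \<noteq> row x div b then 1 else 0) * (if i \<noteq> row x' div b then 1 else 0))"
    if "x < k" "x' < k" for x x'
  proof -
    have "(\<Sum>y<K. Hr x y * Hr x' y) = (\<Sum>y<a*b. real_of_int (Hbar b (row x) y * Hbar b (row x') y))"
      by (simp add: Kab Hr_def)
    also have "\<dots> = real b * (if row x = row x' then 1 else 0) + real b * (\<Sum>i<a. if i \<noteq> row x div b \<and> i \<noteq> row x' div b then 1 else 0)"
      by (rule Hbar_gram[OF m(2) rows(1)[OF that(1)] rows(1)[OF that(2)] rows(2)[OF that(1)] rows(2)[OF that(2)]])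
    also have "(row x = row x') = (x = x')" using assms(3) that by (meson inj_on_eq_iff lessThan_iff)
    also have "(\<Sum>i<a. if i \<noteq> row x div b \<and> i \<noteq> row x' div b then 1 else (0::real))
       = (\<Sum>i<a. (if i \<noteq> row x div b then 1 else 0) * (if i \<noteq> row x' div b then 1 else 0))"
      by (rule sum.cong) auto
    finally show ?thesis .
  qed
  have main: "(\<Sum>y<K. (\<Sum>x<k. d x * Hr x y)^2) \<ge> real b * (\<Sum>x<k. (d x)^2)"
  proof -
    have "(\<Sum>y<K. (\<Sum>x<k. d x * Hr x y)^2) = (\<Sum>x<k. \<Sum>x'<k. d x * d x' * (\<Sum>y<K. Hr x y * Hr x' y))"
      by (rule sq_expand)
    also have "\<dots> = (\<Sum>x<k. \<Sum>x'<k. d x * d x' * (real b * (if x = x' then 1 else 0)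
      + real b * (\<Sum>i<a. (if i \<noteq> row x div b then 1 else 0) * (if i \<noteq> row x' div b then 1 else 0))))"
      by (intro sum.cong refl) (simp add: gram)
    finally show ?thesis using quad_ge[where B="real b" and d=d and k=k and a=a and e="\<lambda>i x. if i \<noteq> row x div b then 1 else 0"] by simp
  qed
  have sq: "sqdist K (ghr_Phi k \<epsilon> row p) (ghr_Phi k \<epsilon> row q) = (c/2)^2 * (\<Sum>y<K. (\<Sum>x<k. d x * Hr x y)^2)"
  proof -
    have "sqdist K (ghr_Phi k \<epsilon> row p) (ghr_Phi k \<epsilon> row q) = (\<Sum>y<K. (c/2)^2 * (\<Sum>x<k. d x * Hr x y)^2)"
      unfolding sqdist_def by (rule sum.cong[OF refl]) (simp only: diff lessThan_iff power_mult_distrib)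
    then show ?thesis by (simp only: sum_distrib_left)
  qed
  have rhs: "1 / (2 * real s) * ((E - 1) / (E + real K / real s - 1))^2 = (c/2)^2 * real b"
  proof -
    have "E + real K / real s - 1 = D / real s" unfolding D_def using spos by (simp add: field_simps)
    then have "(E - 1) / (E + real K / real s - 1) = real s * c" unfolding c_def using spos Dpos by simp
    then show ?thesis using s2 spos by (simp add: power2_eq_square field_simps)
  qed
  show "sqdist (ghr_K k \<epsilon>) (ghr_Phi k \<epsilon> row p) (ghr_Phi k \<epsilon> row q)
           \<ge> 1 / (2 * real (ghr_s k \<epsilon>)) *
             ((exp \<epsilon> - 1) / (exp \<epsilon> + real (ghr_K k \<epsilon>) / real (ghr_s k \<epsilon>) - 1))^2 * sqdist k p q"
  proof -
    have "1 / (2 * real s) * ((E - 1) / (E + real K / real s - 1))^2 * sqdist k p q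
        = (c/2)^2 * (real b * (\<Sum>x<k. (d x)^2))"
      unfolding rhs by (simp add: sqdist_def d_def)
    also have "\<dots> \<le> (c/2)^2 * (\<Sum>y<K. (\<Sum>x<k. d x * Hr x y)^2)"
      by (rule mult_left_mono[OF main]) simp
    also have "\<dots> = sqdist K (ghr_Phi k \<epsilon> row p) (ghr_Phi k \<epsilon> row q)" using sq by simp
    finally show ?thesis unfolding K_def s_def E_def .
  qed
  show "(\<forall>x<k. p x = q x) \<longrightarrow> sqrt (sqdist (ghr_K k \<epsilon>) (ghr_Phi k \<epsilon> row p) (ghr_Phi k \<epsilon> row q)) = 0"
  proof
    assume "\<forall>x<k. p x = q x"
    then have "\<And>y. ghr_Phi k \<epsilon> row p y = ghr_Phi k \<epsilon> row q y" unfolding ghr_Phi_def by simp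
    then show "sqrt (sqdist (ghr_K k \<epsilon>) (ghr_Phi k \<epsilon> row p) (ghr_Phi k \<epsilon> row q)) = 0"
      by (simp add: sqdist_def)
  qed
qed

end
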